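(* Consider the fixed-design additive regression setting, the estimator $\hat g=\sum_{j=1}^p\hat g_j$ and the tuning parameters described in the context. Assume the sub-Gaussian noise condition and the entropy condition hold, and that the empirical compatibility condition holds for some subset $S\subset\{1,\dots,p\}$ and constants $\kappa_0>0$, $\xi_0>1$. Let $\bar g=\sum_{j=1}^p\bar g_j\in\mathcal G$ be arbitrary. Then for any $A_0>(\xi_0+1)/(\xi_0-1)$, with probability at least $1-\epsilon$, $$\mathcal D_n(\hat g,\bar g)\le \xi_1^{-1}\Delta_n(\bar g,S)+2\xi_2^2\kappa_0^{-2}\Big(\sum_{j\in S}\lambda_{nj}^2\Big),$$ where $\xi_1=1-2A_0/\{(\xi_0+1)(A_0-1)\}\in(0,1]$, $\xi_2=(\xi_0+1)(A_0-1)$, $$\mathcal D_n(\hat g,\bar g)=\tfrac12\|\hat g-g^*\|_n^2+\tfrac12\|\hat g-\bar g\|_n^2+(A_0-1)R_n(\hat g-\bar g),$$ $$\Delta_n(\bar g,S)=\tfrac12\|\bar g-g^*\|_n^2+2A_0\Big(\sum_{j=1}^p\rho_{nj}\|\bar g_j\|_{F,j}+\sum_{j\notin S}\lambda_{nj}\|\bar g_j\|_n\Big),$$ and $R_n(\hat g-\bar g)=\sum_{j}\{\rho_{nj}\|\hat g_j-\bar g_j\|_{F,j}+\lambda_{nj}\|\hat g_j-\bar g_j\|_n\}$.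
   Context: Data: $(Y_i,X_i)$, $i=1,\dots,n$, with $Y_i\in\mathbb R$, $X_i\in\mathbb R^d$, $Y_i=g^*(X_i)+\varepsilon_i$, where $g^*:\mathbb R^d\to\mathbb R$ is an arbitrary (not necessarily additive) function. Fixed design: $X_1,\dots,X_n$ are deterministic and probabilities refer to the noise. For $j=1,\dots,p$, $x^{(j)}$ is a fixed sub-vector of coordinates of $x\in\mathbb R^d$, $\mathcal G_j$ is a vector space of real functions of $x^{(j)}$ with a semi-norm $\|\cdot\|_{F,j}$, and $\mathcal G=\{g(x)=\sum_{j=1}^pg_j(x^{(j)}):g_j\in\mathcal G_j\}$; every $g\in\mathcal G$ is considered together with a decomposition $g=\sum_jg_j$, and component-wise quantities refer to it. Empirical norm and inner product: $\|f\|_n^2=n^{-1}\sum_{i=1}^nf(X_i)^2$, $\|Y-g\|_n^2=n^{-1}\sum_i\{Y_i-g(X_i)\}^2$, $\langle\varepsilon,f\rangle_n=n^{-1}\sum_i\varepsilon_if(X_i)$. $H(u,\mathcal F,\|\cdot\|)$ denotes the log of the minimal number of $\|\cdot\|$-balls of radius $u$ covering $\mathcal F$. Sub-Gaussian noise condition: $\varepsilon_1,\dots,\varepsilon_n$ are independent with mean zero and $\max_i D_0E\exp(\varepsilon_i^2/D_0)\le D_1$ for constants $D_0,D_1>0$. $C_1=C_1(D_0,D_1)>0$ is a constant depending only on $(D_0,D_1)$ such that for every $\delta>0$ and every class $\mathcal F$ with $\sup_{f\in\mathcal F}\|f\|_n\le\delta$ and every $\psi\ge\int_0^\delta H^{1/2}(u,\mathcal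 F,\|\cdot\|_n)du$, one has $P\{\sup_{f\in\mathcal F}|\langle\varepsilon,f\rangle_n|/C_1>n^{-1/2}\psi+\delta\sqrt{t/n}\}\le e^{-t}$ for all $t>0$. Entropy condition: for each $j$, with $\mathcal G_j(\delta)=\{f\in\mathcal G_j:\|f\|_{F,j}+\|f\|_n/\delta\le1\}$, a function $\psi_{nj}$ satisfies $\psi_{nj}(\delta)\ge\int_0^\delta H^{1/2}(u,\mathcal G_j(\delta),\|\cdot\|_n)\,du$ for $0<\delta\le1$. Tuning and estimator: constants $0<\epsilon<1$ and $0<w_{nj}\le1$; $\gamma_{nj}=n^{-1/2}\psi_{nj}(w_{nj})/w_{nj}$; $\lambda_{nj}=C_1\{\gamma_{nj}+\sqrt{\log(p/\epsilon)/n}\}$; $\rho_{nj}=\lambda_{nj}w_{nj}$; $R_n(g)=\sum_{j=1}^p(\rho_{nj}\|g_j\|_{F,j}+\lambda_{nj}\|g_j\|_n)$. For a constant $A_0>1$, $\hat g=\sum_j\hat g_j$ is a minimizer of $K_n(g)=\|Y-g\|_n^2/2+A_0R_n(g)$ over $g\in\mathcal G$ and decompositions. Empirical compatibility condition for $(S,\kappa_0,\xi_0)$: for all $f_j\in\mathcal G_j$ and $f=\sum_jf_j$, if $\sum_{j=1}^p\lambda_{nj}w_{nj}\|f_j\|_{F,j}+\sum_{j\notin S}\lambda_{nj}\|f_j\|_n\le\xi_0\sum_{j\in S}\lambda_{nj}\|f_j\|_n$, then $\kappa_0^2(\sum_{j\in S}\lambda_{nj}\|f_j\|_n)^2\le(\sum_{j\in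 S}\lambda_{nj}^2)\|f\|_n^2$. *)

theory Defs
  imports "HOL-Probability.Probability"
begin

definition emp_norm :: "(nat \<Rightarrow> 'x) \<Rightarrow> nat \<Rightarrow> ('x \<Rightarrow> real) \<Rightarrow> real" where
  "emp_norm X n f = sqrt ((1 / real n) * (\<Sum>i<n. (f (X i))^2))"

definition emp_inner :: "(nat \<Rightarrow> 'x) \<Rightarrow> nat \<Rightarrow> (nat \<Rightarrow> real) \<Rightarrow> ('x \<Rightarrow> real) \<Rightarrow> real" where
  "emp_inner X n e f = (1 / real n) * (\<Sum>i<n. e i * f (X i))"

definition emp_cover :: "(nat \<Rightarrow> 'x) \<Rightarrow> nat \<Rightarrow> real \<Rightarrow> ('x \<Rightarrow> real) set \<Rightarrow> ('x \<Rightarrow> real) set \<Rightarrow> bool" where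
  "emp_cover X n u F C \<longleftrightarrow> finite C \<and> F \<subseteq> (\<Union>c\<in>C. {f. emp_norm X n (\<lambda>x. f x - c x) \<le> u})"

definition covering_number :: "(nat \<Rightarrow> 'x) \<Rightarrow> nat \<Rightarrow> real \<Rightarrow> ('x \<Rightarrow> real) set \<Rightarrow> nat" where
  "covering_number X n u F = (LEAST N. \<exists>C. emp_cover X n u F C \<and> card C = N)"

text \<open>Square root of the metric entropy H(u,F,||.||_n) = log N(u,F,||.||_n); infinite if no
  finite cover exists.  (For empty F, N = 0 and we use log 1 = 0.)\<close>

definition sqrt_entropy :: "(nat \<Rightarrow> 'x) \<Rightarrow> nat \<Rightarrow> real \<Rightarrow> ('x \<Rightarrow> real) set \<Rightarrow> ennreal" where
  "sqrt_entropy X n u F =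
     (if \<exists>C. emp_cover X n u F C
      then ennreal (sqrt (ln (real (max 1 (covering_number X n u F))))) else \<infinity>)"

definition entropy_integral :: "(nat \<Rightarrow> 'x) \<Rightarrow> nat \<Rightarrow> real \<Rightarrow> ('x \<Rightarrow> real) set \<Rightarrow> ennreal" where
  "entropy_integral X n \<delta> F = (\<integral>\<^sup>+ u. indicator {0<..\<delta>} u * sqrt_entropy X n u F \<partial>lborel)"

definition entropy_bound :: "(nat \<Rightarrow> 'x) \<Rightarrow> nat \<Rightarrow> real \<Rightarrow> ('x \<Rightarrow> real) set \<Rightarrow> real \<Rightarrow> bool" where
  "entropy_bound X n \<delta> F \<psi> \<longleftrightarrow> 0 \<le> \<psi> \<and> entropy_integral X n \<delta> F \<le> ennreal \<psi>"

definition pen :: "nat \<Rightarrow> (nat \<Rightarrow> real) \<Rightarrow> (nat \<Rightarrow> real) \<Rightarrow> (nat \<Rightarrow> ('x \<Rightarrow> real) \<Rightarrow> real)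
    \<Rightarrow> (nat \<Rightarrow> 'x) \<Rightarrow> nat \<Rightarrow> (nat \<Rightarrow> 'x \<Rightarrow> real) \<Rightarrow> real" where
  "pen p rho lam Fn X n gs = (\<Sum>j<p. rho j * Fn j (gs j) + lam j * emp_norm X n (gs j))"

definition Kn :: "nat \<Rightarrow> (nat \<Rightarrow> real) \<Rightarrow> (nat \<Rightarrow> real) \<Rightarrow> (nat \<Rightarrow> ('x \<Rightarrow> real) \<Rightarrow> real)
    \<Rightarrow> (nat \<Rightarrow> 'x) \<Rightarrow> nat \<Rightarrow> real \<Rightarrow> (nat \<Rightarrow> real) \<Rightarrow> (nat \<Rightarrow> 'x \<Rightarrow> real) \<Rightarrow> real" where
  "Kn p rho lam Fn X n A0 Y gs =
     (1/2) * ((1 / real n) * (\<Sum>i<n. (Y i - (\<Sum>j<p. gs j (X i)))^2)) + A0 * pen p rho lam Fn X n gs"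

definition emp_compat :: "nat \<Rightarrow> (nat \<Rightarrow> ('x \<Rightarrow> real) set) \<Rightarrow> (nat \<Rightarrow> ('x \<Rightarrow> real) \<Rightarrow> real)
    \<Rightarrow> (nat \<Rightarrow> 'x) \<Rightarrow> nat \<Rightarrow> (nat \<Rightarrow> real) \<Rightarrow> (nat \<Rightarrow> real) \<Rightarrow> nat set \<Rightarrow> real \<Rightarrow> real \<Rightarrow> bool" where
  "emp_compat p G Fn X n lam w S \<kappa>0 \<xi>0 \<longleftrightarrow>
     (\<forall>fs. (\<forall>j<p. fs j \<in> G j) \<longrightarrow>
        (\<Sum>j<p. lam j * w j * Fn j (fs j)) + (\<Sum>j\<in>{..<p} - S. lam j * emp_norm X n (fs j))
          \<le> \<xi>0 * (\<Sum>j\<in>S. lam j * emp_norm X n (fs j)) \<longrightarrow>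
        \<kappa>0^2 * (\<Sum>j\<in>S. lam j * emp_norm X n (fs j))^2
          \<le> (\<Sum>j\<in>S. (lam j)^2) * (emp_norm X n (\<lambda>x. \<Sum>j<p. fs j x))^2)"

end

theory Submission
  imports Defs
begin

lemma emp_norm_L2: "emp_norm X n f = sqrt (1/real n) * L2_set (\<lambda>i. f (X i)) {..<n}"
  unfolding emp_norm_def L2_set_def by (simp add: real_sqrt_mult[symmetric] real_sqrt_divide)

lemma emp_norm_nonneg: "0 \<le> emp_norm X n f"
  unfolding emp_norm_def by (simp add: sum_nonneg)

lemma emp_norm_sq: "(emp_norm X n f)^2 = (1/real n) * (\<Sum>i<n. (f (X i))^2)"
  unfolding emp_norm_def by (simp add: sum_nonneg)

lemma emp_norm_add: "emp_norm X n (\<lambda>x. f x + g x) \<le> emp_norm X n f + emp_norm X n g"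
proof -
  have "L2_set (\<lambda>i. f (X i) + g (X i)) {..<n} \<le> L2_set (\<lambda>i. f (X i)) {..<n} + L2_set (\<lambda>i. g (X i)) {..<n}"
    by (rule L2_set_triangle_ineq)
  then have "sqrt (1/real n) * L2_set (\<lambda>i. f (X i) + g (X i)) {..<n} \<le> sqrt (1/real n) * (L2_set (\<lambda>i. f (X i)) {..<n} + L2_set (\<lambda>i. g (X i)) {..<n})"
    by (rule mult_left_mono) simp
  then show ?thesis by (simp add: emp_norm_L2 algebra_simps)
qed

lemma emp_norm_scale: "emp_norm X n (\<lambda>x. c * f x) = \<bar>c\<bar> * emp_norm X n f"
proof -
  have "L2_set (\<lambda>i. c * f (X i)) {..<n} = \<bar>c\<bar> * L2_set (\<lambda>i. f (X i)) {..<n}"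
    unfolding L2_set_def by (simp add: power_mult_distrib real_sqrt_mult sum_nonneg flip: sum_distrib_left)
  then show ?thesis by (simp add: emp_norm_L2)
qed

lemma emp_norm_ext: "(\<And>i. i < n \<Longrightarrow> f (X i) = g (X i)) \<Longrightarrow> emp_norm X n f = emp_norm X n g"
  unfolding emp_norm_def by simp

lemma emp_norm_diff: "emp_norm X n (\<lambda>x. f x - g x) \<le> emp_norm X n f + emp_norm X n g"
proof -
  have "emp_norm X n (\<lambda>x. f x - g x) = emp_norm X n (\<lambda>x. f x + (-1) * g x)" by simp
  also have "\<dots> \<le> emp_norm X n f + emp_norm X n (\<lambda>x. (-1) * g x)" by (rule emp_norm_add)
  also have "emp_norm X n (\<lambda>x. (-1) * g x) = emp_norm X n g" using emp_norm_scale[of X n "-1" g] by simp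
  finally show ?thesis .
qed

lemma emp_norm_zero: "n \<ge> 1 \<Longrightarrow> emp_norm X n f = 0 \<Longrightarrow> i < n \<Longrightarrow> f (X i) = 0"
  unfolding emp_norm_L2 using L2_set_eq_0_iff[of "{..<n}" "\<lambda>i. f (X i)"] by auto

lemma emp_inner_sum: "emp_inner X n e (\<lambda>x. \<Sum>j<p. f j x) = (\<Sum>j<p. emp_inner X n e (f j))"
  unfolding emp_inner_def by (simp add: sum_distrib_left sum.swap[of _ "{..<n}"])

lemma emp_inner_scale: "emp_inner X n e (\<lambda>x. c * f x) = c * emp_inner X n e f"
  unfolding emp_inner_def by (simp add: sum_distrib_left algebra_simps)

lemma emp_inner_zero: "(\<And>i. i < n \<Longrightarrow> f (X i) = 0) \<Longrightarrow> emp_inner X n e f = 0"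
  unfolding emp_inner_def by simp

lemma lim_le: fixes a b c :: real assumes "\<And>t. 0 < t \<Longrightarrow> t \<le> 1 \<Longrightarrow> a \<le> b + t * c" shows "a \<le> b"
proof (rule ccontr)
  assume "\<not> a \<le> b"
  show False
  proof (cases "c \<le> 0")
    case True then show ?thesis using assms[of 1] \<open>\<not> a \<le> b\<close> by simp
  next
    case False
    define t where "t = min 1 ((a-b)/(2*c))"
    have "0 < t" "t \<le> 1" using False \<open>\<not> a \<le> b\<close> by (auto simp: t_def)
    have "t * c \<le> (a-b)/(2*c) * c" using False by (intro mult_right_mono) (auto simp: t_def)
    also have "\<dots> = (a-b)/2" using False by simp
    finally show ?thesis using assms[OF \<open>0<t\<close> \<open>t\<le>1\<close>] \<open>\<not> a \<le> b\<close> by simp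
  qed
qed

lemma kkt:
  fixes ghat gbar :: "nat \<Rightarrow> 'x \<Rightarrow> real" and G :: "nat \<Rightarrow> ('x \<Rightarrow> real) set"
  assumes n: "n \<ge> 1"
  and G_add: "\<And>j f g. j < p \<Longrightarrow> f \<in> G j \<Longrightarrow> g \<in> G j \<Longrightarrow> (\<lambda>x. f x + g x) \<in> G j"
  and G_scale: "\<And>j c f. j < p \<Longrightarrow> f \<in> G j \<Longrightarrow> (\<lambda>x. c * f x) \<in> G j"
  and Fn_scale: "\<And>j c f. j < p \<Longrightarrow> f \<in> G j \<Longrightarrow> Fn j (\<lambda>x. c * f x) = \<bar>c\<bar> * Fn j f"
  and Fn_triangle: "\<And>j f g. j < p \<Longrightarrow> f \<in> G j \<Longrightarrow> g \<in> G j \<Longrightarrow>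
                        Fn j (\<lambda>x. f x + g x) \<le> Fn j f + Fn j g"
  and hin: "\<forall>j<p. ghat j \<in> G j" and bin: "\<forall>j<p. gbar j \<in> G j"
  and rho: "\<forall>j<p. rho j \<ge> 0" and lam: "\<forall>j<p. lam j \<ge> 0" and A0: "A0 \<ge> 0"
  and min: "\<forall>gs. (\<forall>j<p. gs j \<in> G j) \<longrightarrow> Kn p rho lam Fn X n A0 Y ghat \<le> Kn p rho lam Fn X n A0 Y gs"
  shows "(1/real n) * (\<Sum>i<n. (Y i - (\<Sum>j<p. ghat j (X i))) * ((\<Sum>j<p. gbar j (X i)) - (\<Sum>j<p. ghat j (X i))))
     \<le> A0 * (pen p rho lam Fn X n gbar - pen p rho lam Fn X n ghat)"
proof -
  define gt where "gt t = (\<lambda>j x. (1-t) * ghat j x + t * gbar j x)" for t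
  define gh where "gh i = (\<Sum>j<p. ghat j (X i))" for i
  define gb where "gb i = (\<Sum>j<p. gbar j (X i))" for i
  define r where "r i = Y i - gh i" for i
  define d where "d i = gb i - gh i" for i
  define Pb where "Pb = pen p rho lam Fn X n gbar"
  define Ph where "Ph = pen p rho lam Fn X n ghat"
  define Q where "Q = (1/real n) * (\<Sum>i<n. (d i)^2)"
  define RD where "RD = (1/real n) * (\<Sum>i<n. r i * d i)"
  define R2 where "R2 = (1/real n) * (\<Sum>i<n. (r i)^2)"
  have gt_in: "gt t j \<in> G j" if "j < p" for t j
    unfolding gt_def using that hin bin by (intro G_add G_scale) auto
  have pen_conv: "pen p rho lam Fn X n (gt t) \<le> (1-t) * Ph + t * Pb" if t: "0 \<le> t" "t \<le> 1" for t
  proof -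
    have "rho j * Fn j (gt t j) + lam j * emp_norm X n (gt t j)
        \<le> (1-t) * (rho j * Fn j (ghat j) + lam j * emp_norm X n (ghat j))
          + t * (rho j * Fn j (gbar j) + lam j * emp_norm X n (gbar j))" if j: "j < p" for j
    proof -
      have F: "Fn j (gt t j) \<le> (1-t) * Fn j (ghat j) + t * Fn j (gbar j)"
      proof -
        have "Fn j (gt t j) \<le> Fn j (\<lambda>x. (1-t) * ghat j x) + Fn j (\<lambda>x. t * gbar j x)"
          unfolding gt_def using j hin bin by (intro Fn_triangle G_scale) auto
        also have "\<dots> = (1-t) * Fn j (ghat j) + t * Fn j (gbar j)"
          using j hin bin t by (simp add: Fn_scale)
        finally show ?thesis .
      qed
      have E: "emp_norm X n (gt t j) \<le> (1-t) * emp_norm X n (ghat j) + t * emp_norm X n (gbar j)"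
      proof -
        have "emp_norm X n (gt t j) \<le> emp_norm X n (\<lambda>x. (1-t) * ghat j x) + emp_norm X n (\<lambda>x. t * gbar j x)"
          unfolding gt_def by (rule emp_norm_add)
        also have "\<dots> = (1-t) * emp_norm X n (ghat j) + t * emp_norm X n (gbar j)"
          using t by (simp add: emp_norm_scale)
        finally show ?thesis .
      qed
      have "rho j * Fn j (gt t j) \<le> rho j * ((1-t) * Fn j (ghat j) + t * Fn j (gbar j))"
        using F rho j by (intro mult_left_mono) auto
      moreover have "lam j * emp_norm X n (gt t j) \<le> lam j * ((1-t) * emp_norm X n (ghat j) + t * emp_norm X n (gbar j))"
        using E lam j by (intro mult_left_mono) auto
      ultimately show ?thesis by (simp add: algebra_simps)
    qed
    then have "pen p rho lam Fn X n (gt t) \<le> (\<Sum>j<p. (1-t) * (rho j * Fn j (ghat j) + lam j * emp_norm X n (ghat j))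
          + t * (rho j * Fn j (gbar j) + lam j * emp_norm X n (gbar j)))"
      unfolding pen_def by (intro sum_mono) auto
    also have "\<dots> = (1-t) * Ph + t * Pb"
      by (simp add: Ph_def Pb_def pen_def sum.distrib flip: sum_distrib_left)
    finally show ?thesis .
  qed
  have sum_gt: "(\<Sum>j<p. gt t j (X i)) = gh i + t * d i" for t i
    by (simp add: gt_def gh_def d_def gb_def sum.distrib sum_distrib_left algebra_simps sum_subtractf)
  have Kt: "Kn p rho lam Fn X n A0 Y (gt t) = (1/2) * (R2 - 2 * t * RD + t^2 * Q) + A0 * pen p rho lam Fn X n (gt t)" for t
  proof -
    have "(\<Sum>i<n. (Y i - (\<Sum>j<p. gt t j (X i)))^2) = (\<Sum>i<n. (r i)^2 - 2 * t * (r i * d i) + t^2 * (d i)^2)"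
      by (intro sum.cong) (auto simp: sum_gt r_def power2_eq_square algebra_simps)
    also have "\<dots> = (\<Sum>i<n. (r i)^2) - 2 * t * (\<Sum>i<n. r i * d i) + t^2 * (\<Sum>i<n. (d i)^2)"
      by (simp add: sum.distrib sum_subtractf sum_distrib_left)
    finally have eq: "(\<Sum>i<n. (Y i - (\<Sum>j<p. gt t j (X i)))^2) = (\<Sum>i<n. (r i)^2) - 2 * t * (\<Sum>i<n. r i * d i) + t^2 * (\<Sum>i<n. (d i)^2)" .
    show ?thesis unfolding Kn_def eq R2_def RD_def Q_def by (simp add: algebra_simps)
  qed
  have K0: "Kn p rho lam Fn X n A0 Y ghat = (1/2) * R2 + A0 * Ph"
    unfolding Kn_def R2_def Ph_def r_def gh_def by simp
  have "RD \<le> A0 * (Pb - Ph) + t * (Q / 2)" if t: "0 < t" "t \<le> 1" for t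
  proof -
    have "(1/2) * R2 + A0 * Ph \<le> (1/2) * (R2 - 2 * t * RD + t^2 * Q) + A0 * pen p rho lam Fn X n (gt t)"
      using min gt_in K0 Kt by metis
    also have "\<dots> \<le> (1/2) * (R2 - 2 * t * RD + t^2 * Q) + A0 * ((1-t) * Ph + t * Pb)"
      using pen_conv[of t] t A0 by (intro add_left_mono mult_left_mono) auto
    finally have "t * RD \<le> t * (A0 * (Pb - Ph) + t * (Q / 2))"
      by (simp add: algebra_simps power2_eq_square)
    then show ?thesis using t by simp
  qed
  then have "RD \<le> A0 * (Pb - Ph)" by (rule lim_le)
  then show ?thesis unfolding RD_def r_def d_def gh_def gb_def Pb_def Ph_def .
qed

lemma determ:
  fixes ghat gbar :: "nat \<Rightarrow> 'x \<Rightarrow> real" and G :: "nat \<Rightarrow> ('x \<Rightarrow> real) set"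
  assumes n: "n \<ge> 1"
  and G_add: "\<And>j f g. j < p \<Longrightarrow> f \<in> G j \<Longrightarrow> g \<in> G j \<Longrightarrow> (\<lambda>x. f x + g x) \<in> G j"
  and G_scale: "\<And>j c f. j < p \<Longrightarrow> f \<in> G j \<Longrightarrow> (\<lambda>x. c * f x) \<in> G j"
  and Fn_nonneg: "\<And>j f. j < p \<Longrightarrow> f \<in> G j \<Longrightarrow> 0 \<le> Fn j f"
  and Fn_scale: "\<And>j c f. j < p \<Longrightarrow> f \<in> G j \<Longrightarrow> Fn j (\<lambda>x. c * f x) = \<bar>c\<bar> * Fn j f"
  and Fn_triangle: "\<And>j f g. j < p \<Longrightarrow> f \<in> G j \<Longrightarrow> g \<in> G j \<Longrightarrow>
                        Fn j (\<lambda>x. f x + g x) \<le> Fn j f + Fn j g"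
  and hin: "\<forall>j<p. ghat j \<in> G j" and bin: "\<And>j. j < p \<Longrightarrow> gbar j \<in> G j"
  and lam: "\<forall>j<p. lam j \<ge> 0" and wpos: "\<forall>j<p. w j > 0" and rho_def: "\<And>j. rho j = lam j * w j"
  and S_sub: "S \<subseteq> {..<p}"
  and kappa_pos: "\<kappa>0 > 0" and xi_gt: "\<xi>0 > 1"
  and compat: "emp_compat p G Fn X n lam w S \<kappa>0 \<xi>0"
  and A0_gt: "A0 > (\<xi>0 + 1) / (\<xi>0 - 1)"
  and noise: "\<forall>j<p. \<forall>f\<in>G j. \<bar>emp_inner X n e f\<bar> \<le> rho j * Fn j f + lam j * emp_norm X n f"
  and min: "\<forall>gs. (\<forall>j<p. gs j \<in> G j) \<longrightarrow>
           Kn p rho lam Fn X n A0 (\<lambda>i. gstar (X i) + e i) ghat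
             \<le> Kn p rho lam Fn X n A0 (\<lambda>i. gstar (X i) + e i) gs"
  shows "(1/2) * (emp_norm X n (\<lambda>x. (\<Sum>j<p. ghat j x) - gstar x))^2
         + (1/2) * (emp_norm X n (\<lambda>x. (\<Sum>j<p. ghat j x) - (\<Sum>j<p. gbar j x)))^2
         + (A0 - 1) * pen p rho lam Fn X n (\<lambda>j x. ghat j x - gbar j x)
       \<le> ((1/2) * (emp_norm X n (\<lambda>x. (\<Sum>j<p. gbar j x) - gstar x))^2
            + 2 * A0 * ((\<Sum>j<p. rho j * Fn j (gbar j))
                        + (\<Sum>j\<in>{..<p} - S. lam j * emp_norm X n (gbar j))))
           / (1 - 2 * A0 / ((\<xi>0 + 1) * (A0 - 1)))
         + 2 * ((\<xi>0 + 1) * (A0 - 1))^2 / \<kappa>0^2 * (\<Sum>j\<in>S. (lam j)^2)"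
proof -
  define Dl where "Dl = (\<lambda>j x. ghat j x - gbar j x)"
  define A where "A = (emp_norm X n (\<lambda>x. (\<Sum>j<p. ghat j x) - gstar x))^2"
  define B where "B = (emp_norm X n (\<lambda>x. (\<Sum>j<p. ghat j x) - (\<Sum>j<p. gbar j x)))^2"
  define C where "C = (emp_norm X n (\<lambda>x. (\<Sum>j<p. gbar j x) - gstar x))^2"
  define PD where "PD = pen p rho lam Fn X n Dl"
  define Pb where "Pb = pen p rho lam Fn X n gbar"
  define Ph where "Ph = pen p rho lam Fn X n ghat"
  define V where "V = (\<Sum>j<p. rho j * Fn j (gbar j)) + (\<Sum>j\<in>{..<p} - S. lam j * emp_norm X n (gbar j))"
  define T where "T = (\<Sum>j\<in>S. lam j * emp_norm X n (Dl j))"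
  define U where "U = (\<Sum>j<p. lam j * w j * Fn j (Dl j)) + (\<Sum>j\<in>{..<p} - S. lam j * emp_norm X n (Dl j))"
  define s where "s = (\<Sum>j\<in>S. (lam j)^2)"
  define x2 where "x2 = (\<xi>0 + 1) * (A0 - 1)"
  define x1 where "x1 = 1 - 2 * A0 / x2"
  define D where "D = (1/2) * A + (1/2) * B + (A0 - 1) * PD"
  define Dn where "Dn = (1/2) * C + 2 * A0 * V"
  have rho: "\<forall>j<p. rho j \<ge> 0" using lam wpos rho_def by (simp add: less_imp_le)
  have Dl_in: "Dl j \<in> G j" if "j < p" for j
  proof -
    have "(\<lambda>x. ghat j x + (-1) * gbar j x) \<in> G j" using that hin bin by (intro G_add G_scale) auto
    then show ?thesis by (simp add: Dl_def)
  qed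
  have finS: "finite S" using S_sub finite_subset by blast
  have xi1: "\<xi>0 - 1 > 0" using xi_gt by simp
  have A0c: "A0 * (\<xi>0 - 1) > \<xi>0 + 1" using A0_gt xi1 by (simp add: field_simps)
  have A01: "A0 > 1"
  proof -
    have "(\<xi>0 + 1) / (\<xi>0 - 1) > 1" using xi1 by simp
    then show ?thesis using A0_gt by simp
  qed
  have x2pos: "x2 > 0" using A01 xi_gt by (simp add: x2_def)
  have x2big: "x2 > 2 * A0" using A0c by (simp add: x2_def algebra_simps)
  have x1pos: "x1 > 0" using x2big x2pos by (simp add: x1_def field_simps)
  have KK: "(1/real n) * (\<Sum>i<n. ((gstar (X i) + e i) - (\<Sum>j<p. ghat j (X i))) * ((\<Sum>j<p. gbar j (X i)) - (\<Sum>j<p. ghat j (X i))))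
     \<le> A0 * (Pb - Ph)"
    unfolding Pb_def Ph_def
    by (rule kkt[where G=G]) (use n G_add G_scale Fn_scale Fn_triangle hin bin rho lam A01 min in auto)
  define inner where "inner = emp_inner X n e (\<lambda>x. (\<Sum>j<p. ghat j x) - (\<Sum>j<p. gbar j x))"
  have step2: "(1/2) * A + (1/2) * B \<le> (1/2) * C + inner + A0 * (Pb - Ph)"
  proof -
    have "(\<Sum>i<n. ((gstar (X i) + e i) - (\<Sum>j<p. ghat j (X i))) * ((\<Sum>j<p. gbar j (X i)) - (\<Sum>j<p. ghat j (X i))))
       = (\<Sum>i<n. (1/2) * ((\<Sum>j<p. ghat j (X i)) - gstar (X i))^2 + (1/2) * ((\<Sum>j<p. ghat j (X i)) - (\<Sum>j<p. gbar j (X i)))^2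
            - (1/2) * ((\<Sum>j<p. gbar j (X i)) - gstar (X i))^2 - e i * ((\<Sum>j<p. ghat j (X i)) - (\<Sum>j<p. gbar j (X i))))"
      by (intro sum.cong) (auto simp: power2_eq_square algebra_simps)
    also have "\<dots> = (1/2) * (\<Sum>i<n. ((\<Sum>j<p. ghat j (X i)) - gstar (X i))^2) + (1/2) * (\<Sum>i<n. ((\<Sum>j<p. ghat j (X i)) - (\<Sum>j<p. gbar j (X i)))^2)
            - (1/2) * (\<Sum>i<n. ((\<Sum>j<p. gbar j (X i)) - gstar (X i))^2) - (\<Sum>i<n. e i * ((\<Sum>j<p. ghat j (X i)) - (\<Sum>j<p. gbar j (X i))))"
      by (simp add: sum.distrib sum_subtractf sum_distrib_left)
    finally have eq0: "(\<Sum>i<n. ((gstar (X i) + e i) - (\<Sum>j<p. ghat j (X i))) * ((\<Sum>j<p. gbar j (X i)) - (\<Sum>j<p. ghat j (X i))))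
      = (1/2) * (\<Sum>i<n. ((\<Sum>j<p. ghat j (X i)) - gstar (X i))^2) + (1/2) * (\<Sum>i<n. ((\<Sum>j<p. ghat j (X i)) - (\<Sum>j<p. gbar j (X i)))^2)
            - (1/2) * (\<Sum>i<n. ((\<Sum>j<p. gbar j (X i)) - gstar (X i))^2) - (\<Sum>i<n. e i * ((\<Sum>j<p. ghat j (X i)) - (\<Sum>j<p. gbar j (X i))))" .
    have gen: "\<And>a b c d x::real. x * ((1/2)*a + (1/2)*b - (1/2)*c - d) = (1/2)*(x*a) + (1/2)*(x*b) - (1/2)*(x*c) - x*d"
      by (simp add: algebra_simps)
    have eq: "(1/real n) * (\<Sum>i<n. ((gstar (X i) + e i) - (\<Sum>j<p. ghat j (X i))) * ((\<Sum>j<p. gbar j (X i)) - (\<Sum>j<p. ghat j (X i))))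
       = (1/2) * A + (1/2) * B - (1/2) * C - inner"
      unfolding A_def B_def C_def inner_def emp_norm_sq emp_inner_def eq0 by (rule gen)
    show ?thesis using KK unfolding eq by simp
  qed
  have step3: "inner \<le> PD"
  proof -
    have "inner = emp_inner X n e (\<lambda>x. \<Sum>j<p. Dl j x)"
      unfolding inner_def Dl_def by (simp add: sum_subtractf)
    also have "\<dots> = (\<Sum>j<p. emp_inner X n e (Dl j))" by (rule emp_inner_sum)
    also have "\<dots> \<le> (\<Sum>j<p. rho j * Fn j (Dl j) + lam j * emp_norm X n (Dl j))"
    proof (intro sum_mono)
      fix j assume "j \<in> {..<p}"
      then show "emp_inner X n e (Dl j) \<le> rho j * Fn j (Dl j) + lam j * emp_norm X n (Dl j)"
        using noise Dl_in[of j] by force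
    qed
    finally show ?thesis unfolding PD_def pen_def .
  qed
  have step4: "PD + Pb - Ph \<le> 2 * V + 2 * T"
  proof -
    have "rho j * Fn j (Dl j) + lam j * emp_norm X n (Dl j) + (rho j * Fn j (gbar j) + lam j * emp_norm X n (gbar j))
          - (rho j * Fn j (ghat j) + lam j * emp_norm X n (ghat j))
        \<le> 2 * (rho j * Fn j (gbar j)) + (if j \<in> S then 2 * (lam j * emp_norm X n (Dl j)) else 2 * (lam j * emp_norm X n (gbar j)))"
      if j: "j < p" for j
    proof -
      have F1: "Fn j (Dl j) \<le> Fn j (ghat j) + Fn j (gbar j)"
      proof -
        have "Fn j (Dl j) = Fn j (\<lambda>x. ghat j x + (-1) * gbar j x)" by (simp add: Dl_def)
        also have "\<dots> \<le> Fn j (ghat j) + Fn j (\<lambda>x. (-1) * gbar j x)"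
          using j hin bin by (intro Fn_triangle G_scale) auto
        also have "Fn j (\<lambda>x. (-1) * gbar j x) = Fn j (gbar j)" using j bin Fn_scale[of j "gbar j" "-1"] by simp
        finally show ?thesis .
      qed
      have E1: "emp_norm X n (Dl j) \<le> emp_norm X n (ghat j) + emp_norm X n (gbar j)"
        unfolding Dl_def by (rule emp_norm_diff)
      have E2: "emp_norm X n (gbar j) \<le> emp_norm X n (ghat j) + emp_norm X n (Dl j)"
      proof -
        have "emp_norm X n (gbar j) = emp_norm X n (\<lambda>x. ghat j x - Dl j x)" by (simp add: Dl_def)
        also have "\<dots> \<le> emp_norm X n (ghat j) + emp_norm X n (Dl j)" by (rule emp_norm_diff)
        finally show ?thesis .
      qed
      have r1: "rho j * Fn j (Dl j) \<le> rho j * (Fn j (ghat j) + Fn j (gbar j))"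
        using F1 rho j by (intro mult_left_mono) auto
      have l1: "lam j * emp_norm X n (Dl j) \<le> lam j * (emp_norm X n (ghat j) + emp_norm X n (gbar j))"
        using E1 lam j by (intro mult_left_mono) auto
      have l2: "lam j * emp_norm X n (gbar j) \<le> lam j * (emp_norm X n (ghat j) + emp_norm X n (Dl j))"
        using E2 lam j by (intro mult_left_mono) auto
      show ?thesis using r1 l1 l2 by (auto simp: algebra_simps)
    qed
    then have "PD + Pb - Ph \<le> (\<Sum>j<p. 2 * (rho j * Fn j (gbar j)) + (if j \<in> S then 2 * (lam j * emp_norm X n (Dl j)) else 2 * (lam j * emp_norm X n (gbar j))))"
      unfolding PD_def Pb_def Ph_def pen_def
      by (simp only: sum.distrib[symmetric] sum_subtractf[symmetric]) (intro sum_mono, auto)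
    also have "\<dots> = 2 * (\<Sum>j<p. rho j * Fn j (gbar j)) + (2 * T + 2 * (\<Sum>j\<in>{..<p} - S. lam j * emp_norm X n (gbar j)))"
    proof -
      have "{..<p} \<inter> {j. j \<in> S} = S" "{..<p} \<inter> - {j. j \<in> S} = {..<p} - S" using S_sub by auto
      then show ?thesis
        by (simp add: sum.distrib sum.If_cases T_def sum_distrib_left)
    qed
    finally show ?thesis by (simp add: V_def algebra_simps)
  qed
  have star: "D \<le> Dn + 2 * A0 * T"
  proof -
    have "D \<le> (1/2) * C + PD + A0 * (Pb - Ph) + (A0 - 1) * PD"
      using step2 step3 unfolding D_def by simp
    also have "\<dots> = (1/2) * C + A0 * (PD + Pb - Ph)" by (simp add: algebra_simps)
    also have "\<dots> \<le> (1/2) * C + A0 * (2 * V + 2 * T)"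
      using step4 A01 by (intro add_left_mono mult_left_mono) auto
    finally show ?thesis by (simp add: Dn_def algebra_simps)
  qed
  have PDsplit: "PD = U + T"
  proof -
    have "(\<Sum>j<p. lam j * emp_norm X n (Dl j)) = (\<Sum>j\<in>{..<p} - S. lam j * emp_norm X n (Dl j)) + T"
      unfolding T_def using S_sub by (simp add: sum.subset_diff)
    then show ?thesis unfolding PD_def pen_def U_def rho_def by (simp add: sum.distrib)
  qed
  have Tnn: "T \<ge> 0" unfolding T_def using lam S_sub by (intro sum_nonneg) (auto intro!: mult_nonneg_nonneg emp_norm_nonneg)
  have Unn: "U \<ge> 0" unfolding U_def using lam wpos Fn_nonneg Dl_in
    by (intro add_nonneg_nonneg sum_nonneg) (auto intro!: mult_nonneg_nonneg emp_norm_nonneg simp: less_imp_le)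
  have Ann: "A \<ge> 0" "B \<ge> 0" "C \<ge> 0" by (simp_all add: A_def B_def C_def)
  have Vnn: "V \<ge> 0" unfolding V_def using lam rho Fn_nonneg bin
    by (intro add_nonneg_nonneg sum_nonneg) (auto intro!: mult_nonneg_nonneg emp_norm_nonneg)
  have Dnn: "Dn \<ge> 0" unfolding Dn_def using Ann Vnn A01 by simp
  have snn: "s \<ge> 0" unfolding s_def by (simp add: sum_nonneg)
  have DgeU: "D \<ge> (A0 - 1) * (U + T)" using Ann PDsplit A01 by (simp add: D_def)
  have DgeB: "B \<le> 2 * D" using Ann PDsplit Unn Tnn A01 by (simp add: D_def)
  have Dnn2: "D \<ge> 0" using DgeU Unn Tnn A01 by (smt (verit) mult_nonneg_nonneg)
  have main: "D \<le> Dn / x1 + 2 * x2^2 / \<kappa>0^2 * s"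
  proof (cases "x2 * T \<le> D")
    case True
    have "2 * A0 * T \<le> (2 * A0 / x2) * D"
      using True x2pos A01 by (simp add: field_simps)
    then have "D * x1 \<le> Dn" using star by (simp add: x1_def algebra_simps)
    then have "D \<le> Dn / x1" using x1pos by (simp add: field_simps)
    moreover have "2 * x2^2 / \<kappa>0^2 * s \<ge> 0" using snn by simp
    ultimately show ?thesis by simp
  next
    case False
    then have lt: "D < x2 * T" by simp
    have Tpos: "T > 0" using lt Dnn2 x2pos by (metis mult_nonneg_nonneg less_le_not_le Tnn linorder_not_le order.not_eq_order_implies_strict mult_zero_right)
    have "(A0 - 1) * (U + T) < (A0 - 1) * ((\<xi>0 + 1) * T)" using DgeU lt by (simp add: x2_def algebra_simps)
    then have "U + T < (\<xi>0 + 1) * T" using A01 by simp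
    then have Ule: "U \<le> \<xi>0 * T" by (simp add: algebra_simps)
    have cc: "\<kappa>0^2 * T^2 \<le> s * (emp_norm X n (\<lambda>x. \<Sum>j<p. Dl j x))^2"
      using compat Dl_in Ule unfolding emp_compat_def U_def T_def s_def by blast
    have "(emp_norm X n (\<lambda>x. \<Sum>j<p. Dl j x))^2 = B"
      unfolding B_def Dl_def by (simp add: sum_subtractf)
    then have "\<kappa>0^2 * T^2 \<le> s * (2 * D)" using cc DgeB snn by (metis mult_left_mono order_trans)
    also have "\<dots> \<le> s * (2 * (x2 * T))" using lt snn by (intro mult_left_mono) auto
    finally have "\<kappa>0^2 * T * T \<le> (2 * s * x2) * T" by (simp add: power2_eq_square algebra_simps)
    then have kT: "\<kappa>0^2 * T \<le> 2 * s * x2" using Tpos by simp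
    have "D < x2 * T" by (rule lt)
    also have "x2 * T = x2 * (\<kappa>0^2 * T) / \<kappa>0^2" using kappa_pos by simp
    also have "\<dots> \<le> x2 * (2 * s * x2) / \<kappa>0^2" using kT x2pos kappa_pos by (intro divide_right_mono mult_left_mono) auto
    also have "\<dots> = 2 * x2^2 / \<kappa>0^2 * s" by (simp add: power2_eq_square)
    finally have "D < 2 * x2^2 / \<kappa>0^2 * s" .
    moreover have "Dn / x1 \<ge> 0" using Dnn x1pos by simp
    ultimately show ?thesis by simp
  qed
  show ?thesis using main unfolding D_def Dn_def A_def B_def C_def PD_def Dl_def V_def x1_def x2_def s_def .
qed

lemma noise_scale:
  fixes f :: "'x \<Rightarrow> real" and G :: "('x \<Rightarrow> real) set" and Fn :: "('x \<Rightarrow> real) \<Rightarrow> real"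
  assumes n: "n \<ge> 1"
  and G_scale: "\<And>c f. f \<in> G \<Longrightarrow> (\<lambda>x. c * f x) \<in> G"
  and Fn_nonneg: "\<And>f. f \<in> G \<Longrightarrow> 0 \<le> Fn f"
  and Fn_scale: "\<And>c f. f \<in> G \<Longrightarrow> Fn (\<lambda>x. c * f x) = \<bar>c\<bar> * Fn f"
  and w: "0 < w"
  and C1: "C1 > 0"
  and bnd: "\<forall>f\<in>{f\<in>G. Fn f + emp_norm X n f / w \<le> 1}. \<bar>emp_inner X n e f\<bar> / C1 \<le> psi / sqrt (real n) + w * sqrt (t / real n)"
  and lam: "lam = C1 * (psi / (sqrt (real n) * w) + sqrt (t / real n))"
  and f: "f \<in> G"
  and rho: "rho = lam * w"
  shows "\<bar>emp_inner X n e f\<bar> \<le> rho * Fn f + lam * emp_norm X n f"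
proof -
  define c where "c = Fn f + emp_norm X n f / w"
  have Fnn: "Fn f \<ge> 0" using Fn_nonneg[OF f] .
  have Enn: "emp_norm X n f \<ge> 0" by (rule emp_norm_nonneg)
  show ?thesis
  proof (cases "c = 0")
    case True
    have q: "emp_norm X n f / w \<ge> 0" using Enn w by simp
    then have "Fn f = 0" "emp_norm X n f / w = 0" using True Fnn unfolding c_def by linarith+
    then have "Fn f = 0" "emp_norm X n f = 0" using w by auto
    moreover have "emp_inner X n e f = 0"
      using emp_norm_zero[OF n \<open>emp_norm X n f = 0\<close>] by (intro emp_inner_zero) auto
    ultimately show ?thesis by simp
  next
    case False
    then have cpos: "c > 0" using Fnn Enn w unfolding c_def by (smt (verit) divide_nonneg_pos)
    define h where "h = (\<lambda>x. (1/c) * f x)"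
    have hG: "h \<in> G" unfolding h_def by (rule G_scale[OF f])
    have "Fn h + emp_norm X n h / w = (Fn f + emp_norm X n f / w) / c"
    proof -
      have "Fn h = (1/c) * Fn f" unfolding h_def using Fn_scale[OF f, of "1/c"] cpos by simp
      moreover have "emp_norm X n h = (1/c) * emp_norm X n f" unfolding h_def using emp_norm_scale[of X n "1/c" f] cpos by simp
      ultimately show ?thesis using cpos by (simp add: field_simps)
    qed
    then have "Fn h + emp_norm X n h / w \<le> 1" using cpos by (simp add: c_def)
    then have "\<bar>emp_inner X n e h\<bar> / C1 \<le> psi / sqrt (real n) + w * sqrt (t / real n)"
      using bnd hG by auto
    moreover have "emp_inner X n e h = emp_inner X n e f / c" unfolding h_def using emp_inner_scale[of X n e "1/c" f] by simp
    ultimately have "\<bar>emp_inner X n e f\<bar> \<le> C1 * (psi / sqrt (real n) + w * sqrt (t / real n)) * c"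
      using cpos C1 by (simp add: field_simps)
    also have "\<dots> = rho * Fn f + lam * emp_norm X n f"
    proof -
      have gen: "\<And>s q. s > 0 \<Longrightarrow> C1 * (psi / s + w * q) * (Fn f + emp_norm X n f / w)
          = (C1 * (psi / (s * w) + q) * w) * Fn f + C1 * (psi / (s * w) + q) * emp_norm X n f"
        using w by (simp add: field_simps)
      have "sqrt (real n) > 0" using n by simp
      from gen[OF this, of "sqrt (t / real n)"] show ?thesis unfolding rho lam c_def .
    qed
    finally show ?thesis .
  qed
qed

theorem theorem1:
  fixes M :: "'w measure"
    and eps :: "nat \<Rightarrow> 'w \<Rightarrow> real"
    and X :: "nat \<Rightarrow> real^'d"
    and gstar :: "real^'d \<Rightarrow> real"
    and n p :: nat
    and J :: "nat \<Rightarrow> 'd set"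
    and G :: "nat \<Rightarrow> (real^'d \<Rightarrow> real) set"
    and Fn :: "nat \<Rightarrow> (real^'d \<Rightarrow> real) \<Rightarrow> real"
    and D0 D1 C1 :: real
    and psi :: "nat \<Rightarrow> real \<Rightarrow> real"
    and epsilon :: real and w lam rho :: "nat \<Rightarrow> real"
    and A0 \<kappa>0 \<xi>0 :: real
    and S :: "nat set"
    and gbar :: "nat \<Rightarrow> real^'d \<Rightarrow> real"
  assumes n_pos: "n \<ge> 1" and p_pos: "p \<ge> 1"
    \<comment> \<open>component spaces: vector spaces of functions of the sub-vector x^(j), with semi-norms\<close>
    and G_subvec: "\<And>j g x y. j < p \<Longrightarrow> g \<in> G j \<Longrightarrow> (\<forall>k\<in>J j. x $ k = y $ k) \<Longrightarrow> g x = g y"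
    and G_zero: "\<And>j. j < p \<Longrightarrow> (\<lambda>x. 0) \<in> G j"
    and G_add: "\<And>j f g. j < p \<Longrightarrow> f \<in> G j \<Longrightarrow> g \<in> G j \<Longrightarrow> (\<lambda>x. f x + g x) \<in> G j"
    and G_scale: "\<And>j c f. j < p \<Longrightarrow> f \<in> G j \<Longrightarrow> (\<lambda>x. c * f x) \<in> G j"
    and Fn_nonneg: "\<And>j f. j < p \<Longrightarrow> f \<in> G j \<Longrightarrow> 0 \<le> Fn j f"
    and Fn_scale: "\<And>j c f. j < p \<Longrightarrow> f \<in> G j \<Longrightarrow> Fn j (\<lambda>x. c * f x) = \<bar>c\<bar> * Fn j f"
    and Fn_triangle: "\<And>j f g. j < p \<Longrightarrow> f \<in> G j \<Longrightarrow> g \<in> G j \<Longrightarrow>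
                        Fn j (\<lambda>x. f x + g x) \<le> Fn j f + Fn j g"
    \<comment> \<open>sub-Gaussian noise condition\<close>
    and M_prob: "prob_space M"
    and eps_indep: "prob_space.indep_vars M (\<lambda>_. borel) eps {..<n}"
    and eps_int: "\<And>i. i < n \<Longrightarrow> integrable M (eps i)"
    and eps_mean: "\<And>i. i < n \<Longrightarrow> (\<integral>\<omega>. eps i \<omega> \<partial>M) = 0"
    and D_pos: "D0 > 0" "D1 > 0"
    and subg_int: "\<And>i. i < n \<Longrightarrow> integrable M (\<lambda>\<omega>. exp ((eps i \<omega>)^2 / D0))"
    and subg: "\<And>i. i < n \<Longrightarrow> D0 * (\<integral>\<omega>. exp ((eps i \<omega>)^2 / D0) \<partial>M) \<le> D1"
    \<comment> \<open>defining property of the constant C1 = C1(D0,D1)\<close>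
    and C1_pos: "C1 > 0"
    and C1_conc: "\<And>\<delta> (F :: (real^'d \<Rightarrow> real) set) \<psi> t. \<delta> > 0 \<Longrightarrow>
         (\<forall>f\<in>F. emp_norm X n f \<le> \<delta>) \<Longrightarrow> entropy_bound X n \<delta> F \<psi> \<Longrightarrow> t > 0 \<Longrightarrow>
         \<exists>A\<in>sets M. measure M A \<ge> 1 - exp (- t) \<and>
            (\<forall>\<omega>\<in>A. \<forall>f\<in>F. \<bar>emp_inner X n (\<lambda>i. eps i \<omega>) f\<bar> / C1
                      \<le> \<psi> / sqrt (real n) + \<delta> * sqrt (t / real n))"
    \<comment> \<open>entropy condition\<close>
    and entropy: "\<And>j \<delta>. j < p \<Longrightarrow> 0 < \<delta> \<Longrightarrow> \<delta> \<le> 1 \<Longrightarrow>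
         entropy_bound X n \<delta> {f \<in> G j. Fn j f + emp_norm X n f / \<delta> \<le> 1} (psi j \<delta>)"
    \<comment> \<open>tuning parameters\<close>
    and epsilon_bounds: "0 < epsilon" "epsilon < 1"
    and w_bounds: "\<And>j. j < p \<Longrightarrow> 0 < w j \<and> w j \<le> 1"
    and lam_def: "\<And>j. lam j = C1 * (psi j (w j) / (sqrt (real n) * w j)
                                     + sqrt (ln (real p / epsilon) / real n))"
    and rho_def: "\<And>j. rho j = lam j * w j"
    \<comment> \<open>compatibility condition\<close>
    and S_sub: "S \<subseteq> {..<p}"
    and kappa_pos: "\<kappa>0 > 0" and xi_gt: "\<xi>0 > 1"
    and compat: "emp_compat p G Fn X n lam w S \<kappa>0 \<xi>0"
    and A0_gt: "A0 > (\<xi>0 + 1) / (\<xi>0 - 1)"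
    and gbar_in: "\<And>j. j < p \<Longrightarrow> gbar j \<in> G j"
  shows "\<exists>A\<in>sets M. measure M A \<ge> 1 - epsilon \<and>
    (\<forall>\<omega>\<in>A. \<forall>ghat.
       ((\<forall>j<p. ghat j \<in> G j) \<and>
        (\<forall>gs. (\<forall>j<p. gs j \<in> G j) \<longrightarrow>
           Kn p rho lam Fn X n A0 (\<lambda>i. gstar (X i) + eps i \<omega>) ghat
             \<le> Kn p rho lam Fn X n A0 (\<lambda>i. gstar (X i) + eps i \<omega>) gs))
       \<longrightarrow>
       (1/2) * (emp_norm X n (\<lambda>x. (\<Sum>j<p. ghat j x) - gstar x))^2
         + (1/2) * (emp_norm X n (\<lambda>x. (\<Sum>j<p. ghat j x) - (\<Sum>j<p. gbar j x)))^2
         + (A0 - 1) * pen p rho lam Fn X n (\<lambda>j x. ghat j x - gbar j x)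
       \<le> ((1/2) * (emp_norm X n (\<lambda>x. (\<Sum>j<p. gbar j x) - gstar x))^2
            + 2 * A0 * ((\<Sum>j<p. rho j * Fn j (gbar j))
                        + (\<Sum>j\<in>{..<p} - S. lam j * emp_norm X n (gbar j))))
           / (1 - 2 * A0 / ((\<xi>0 + 1) * (A0 - 1)))
         + 2 * ((\<xi>0 + 1) * (A0 - 1))^2 / \<kappa>0^2 * (\<Sum>j\<in>S. (lam j)^2))"
proof -
  interpret P: prob_space M by (rule M_prob)
  define t where "t = ln (real p / epsilon)"
  have pe: "real p / epsilon > 1" using p_pos epsilon_bounds by (simp add: field_simps)
  have tpos: "t > 0" unfolding t_def using pe by simp
  have expt: "exp (- t) = epsilon / real p" unfolding t_def using pe p_pos epsilon_bounds
    by (simp add: exp_minus exp_ln)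
  define F where "F j = {f \<in> G j. Fn j f + emp_norm X n f / w j \<le> 1}" for j
  have ex: "\<forall>j\<in>{..<p}. \<exists>A\<in>sets M. measure M A \<ge> 1 - exp (- t) \<and>
            (\<forall>\<omega>\<in>A. \<forall>f\<in>F j. \<bar>emp_inner X n (\<lambda>i. eps i \<omega>) f\<bar> / C1
                      \<le> psi j (w j) / sqrt (real n) + w j * sqrt (t / real n))"
  proof
    fix j assume "j \<in> {..<p}"
    then have j: "j < p" by simp
    have wj: "0 < w j" "w j \<le> 1" using w_bounds[OF j] by auto
    have sup: "\<forall>f\<in>F j. emp_norm X n f \<le> w j"
    proof
      fix f assume "f \<in> F j"
      then have "f \<in> G j" "Fn j f + emp_norm X n f / w j \<le> 1" by (auto simp: F_def)
      moreover have "0 \<le> Fn j f" using Fn_nonneg[OF j] calculation by simp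
      ultimately have "emp_norm X n f / w j \<le> 1" by linarith
      then show "emp_norm X n f \<le> w j" using wj by (simp add: field_simps)
    qed
    show "\<exists>A\<in>sets M. measure M A \<ge> 1 - exp (- t) \<and>
            (\<forall>\<omega>\<in>A. \<forall>f\<in>F j. \<bar>emp_inner X n (\<lambda>i. eps i \<omega>) f\<bar> / C1
                      \<le> psi j (w j) / sqrt (real n) + w j * sqrt (t / real n))"
      using C1_conc[OF wj(1) sup _ tpos] entropy[OF j wj] unfolding F_def by blast
  qed
  then obtain AA where AA: "\<And>j. j \<in> {..<p} \<Longrightarrow> AA j \<in> sets M \<and> measure M (AA j) \<ge> 1 - exp (- t) \<and>
            (\<forall>\<omega>\<in>AA j. \<forall>f\<in>F j. \<bar>emp_inner X n (\<lambda>i. eps i \<omega>) f\<bar> / C1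
                      \<le> psi j (w j) / sqrt (real n) + w j * sqrt (t / real n))"
    by metis
  define Ev where "Ev = (\<Inter>j\<in>{..<p}. AA j)"
  have Ev_sets: "Ev \<in> sets M" unfolding Ev_def
  proof (intro sets.finite_INT)
    have "0 \<in> {..<p}" using p_pos by simp
    then show "{..<p} \<noteq> {}" by blast
  qed (use AA in auto)
  have Ev_meas: "measure M Ev \<ge> 1 - epsilon"
  proof -
    have eqU: "space M - Ev = (\<Union>j\<in>{..<p}. space M - AA j)" unfolding Ev_def using p_pos by auto
    have "measure M (\<Union>j\<in>{..<p}. space M - AA j) \<le> (\<Sum>j\<in>{..<p}. measure M (space M - AA j))"
      by (rule P.finite_measure_subadditive_finite) (use AA in auto)
    then have "measure M (space M - Ev) \<le> (\<Sum>j\<in>{..<p}. measure M (space M - AA j))"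
      by (simp only: eqU)
    also have "\<dots> = (\<Sum>j\<in>{..<p}. 1 - measure M (AA j))"
      using AA by (intro sum.cong) (auto simp: P.prob_compl)
    also have "\<dots> \<le> (\<Sum>j\<in>{..<p}. epsilon / real p)"
      using AA expt by (intro sum_mono) force
    also have "\<dots> = epsilon" using p_pos by simp
    finally show ?thesis using P.prob_compl[OF Ev_sets] by simp
  qed
  have psinn: "psi j (w j) \<ge> 0" if "j < p" for j
    using entropy[OF that] w_bounds[OF that] unfolding entropy_bound_def by auto
  have lamnn: "\<forall>j<p. lam j \<ge> 0"
  proof (intro allI impI)
    fix j assume j: "j < p"
    have "psi j (w j) / (sqrt (real n) * w j) \<ge> 0"
      using psinn[OF j] w_bounds[OF j] n_pos by (intro divide_nonneg_pos) auto
    then show "lam j \<ge> 0" unfolding lam_def t_def[symmetric] using C1_pos tpos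
      by (intro mult_nonneg_nonneg add_nonneg_nonneg) auto
  qed
  show ?thesis
  proof (intro bexI[OF _ Ev_sets] conjI Ev_meas ballI allI impI)
    fix \<omega> ghat assume om: "\<omega> \<in> Ev"
    assume hyp: "(\<forall>j<p. ghat j \<in> G j) \<and>
        (\<forall>gs. (\<forall>j<p. gs j \<in> G j) \<longrightarrow>
           Kn p rho lam Fn X n A0 (\<lambda>i. gstar (X i) + eps i \<omega>) ghat
             \<le> Kn p rho lam Fn X n A0 (\<lambda>i. gstar (X i) + eps i \<omega>) gs)"
    have noise: "\<forall>j<p. \<forall>f\<in>G j. \<bar>emp_inner X n (\<lambda>i. eps i \<omega>) f\<bar> \<le> rho j * Fn j f + lam j * emp_norm X n f"
    proof (intro allI impI ballI)
      fix j f assume j: "j < p" and f: "f \<in> G j"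
      have bnd: "\<forall>f\<in>F j. \<bar>emp_inner X n (\<lambda>i. eps i \<omega>) f\<bar> / C1
                      \<le> psi j (w j) / sqrt (real n) + w j * sqrt (t / real n)"
        using AA[of j] om j unfolding Ev_def by auto
      show "\<bar>emp_inner X n (\<lambda>i. eps i \<omega>) f\<bar> \<le> rho j * Fn j f + lam j * emp_norm X n f"
        by (rule noise_scale[OF n_pos _ _ _ _ C1_pos _ _ f])
           (use j G_scale Fn_nonneg Fn_scale w_bounds bnd lam_def rho_def in \<open>auto simp: F_def t_def\<close>)
    qed
    show "(1/2) * (emp_norm X n (\<lambda>x. (\<Sum>j<p. ghat j x) - gstar x))^2
         + (1/2) * (emp_norm X n (\<lambda>x. (\<Sum>j<p. ghat j x) - (\<Sum>j<p. gbar j x)))^2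
         + (A0 - 1) * pen p rho lam Fn X n (\<lambda>j x. ghat j x - gbar j x)
       \<le> ((1/2) * (emp_norm X n (\<lambda>x. (\<Sum>j<p. gbar j x) - gstar x))^2
            + 2 * A0 * ((\<Sum>j<p. rho j * Fn j (gbar j))
                        + (\<Sum>j\<in>{..<p} - S. lam j * emp_norm X n (gbar j))))
           / (1 - 2 * A0 / ((\<xi>0 + 1) * (A0 - 1)))
         + 2 * ((\<xi>0 + 1) * (A0 - 1))^2 / \<kappa>0^2 * (\<Sum>j\<in>S. (lam j)^2)"
      by (rule determ[where G=G and w=w and e="\<lambda>i. eps i \<omega>"])
         (use n_pos G_add G_scale Fn_nonneg Fn_scale Fn_triangle hyp gbar_in lamnn w_bounds rho_def
              S_sub kappa_pos xi_gt compat A0_gt noise in auto)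
  qed
qed

end
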